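(* Let $d\ge 1$ and $1\le q\le d$. Let $\mathbf{w}_1,\dots,\mathbf{w}_q$ be independent random vectors, each uniformly distributed on the unit sphere $S^{d-1}\subset\mathbb{R}^d$, and let $\{\mathbf{u}_1,\dots,\mathbf{u}_q\}$ be the orthonormal set obtained from them by Gram–Schmidt orthogonalization. Let $\mathbf{g}\in\mathbb{R}^d$ be a fixed nonzero vector, $\overline{\mathbf{g}}=\mathbf{g}/\|\mathbf{g}\|$, $\mathbf{v}:=\sum_{i=1}^q \operatorname{sign}(\mathbf{g}^\top\mathbf{u}_i)\,\mathbf{u}_i$ and $\overline{\mathbf{v}}=\mathbf{v}/\|\mathbf{v}\|$. Then $$\mathbb{E}\big[(\overline{\mathbf{g}}^\top\overline{\mathbf{v}})^2\big]=\frac{1}{d}\left(\frac{2}{\pi}(q-1)+1\right).$$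
   Context: $\operatorname{sign}(a)=+1$ if $a>0$, $-1$ if $a<0$ (ties occur with probability zero). $\|\cdot\|$ is the Euclidean norm. *)

theory Defs
  imports "HOL-Probability.Probability"
begin

text \<open>Uniform (normalized surface) measure on the unit sphere of a Euclidean space,
  defined as the cone measure: push-forward of the uniform distribution on the open unit
  ball under radial projection x \<mapsto> x / norm x.\<close>
definition sphere_uniform :: "'a::euclidean_space measure" where
  "sphere_uniform = distr (uniform_measure lborel (ball 0 1)) borel (\<lambda>x. x /\<^sub>R norm x)"

fun gram_schmidt_list :: "(nat \<Rightarrow> 'a::real_inner) \<Rightarrow> nat \<Rightarrow> 'a list" where
  "gram_schmidt_list w 0 = []"
| "gram_schmidt_list w (Suc k) =
     (let us = gram_schmidt_list w k;
          y = w k - sum_list (map (\<lambda>u. (w k \<bullet> u) *\<^sub>R u) us)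
      in us @ [y /\<^sub>R norm y])"

end

theory Submission
  imports Defs "HOL-Analysis.Analysis"
begin


typedef ('a::finite) wo = "{..<CARD('a)}" morphisms rep_wo abs_wo
  by (rule_tac x=0 in exI) auto

instance wo :: (finite) finite
proof
  show "finite (UNIV :: 'a wo set)"
    by (metis finite_imageI finite_lessThan type_definition.univ type_definition_wo)
qed

instantiation wo :: (finite) linorder
begin
definition "less_eq_wo (x::'a wo) (y::'a wo) \<longleftrightarrow> rep_wo x \<le> rep_wo y"
definition "less_wo (x::'a wo) (y::'a wo) \<longleftrightarrow> rep_wo x < rep_wo y"
instance by standard (auto simp: less_eq_wo_def less_wo_def rep_wo_inject)
end

instance wo :: (finite) wellorder
proof
  fix P :: "'a wo \<Rightarrow> bool" and a :: "'a wo"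
  assume H: "\<And>x. (\<And>y. y < x \<Longrightarrow> P y) \<Longrightarrow> P x"
  have "\<forall>x. rep_wo x = n \<longrightarrow> P x" for n
    by (induction n rule: less_induct) (metis H less_wo_def)
  then show "P a" by blast
qed

lemma card_wo: "CARD('a::finite wo) = CARD('a)"
  using type_definition.card[OF type_definition_wo] by simp

lemma linear_borel: "linear (f :: 'a::euclidean_space \<Rightarrow> 'b::euclidean_space) \<Longrightarrow> f \<in> borel_measurable borel"
  by (intro borel_measurable_continuous_onI linear_continuous_on) (simp add: linear_conv_bounded_linear)

lemma prod_Basis_vec: "(\<Prod>b\<in>Basis. (x::real^'n) \<bullet> b) = (\<Prod>i\<in>UNIV. x $ i)"
proof -
  have B: "(Basis :: (real^'n) set) = (\<lambda>i. axis i 1) ` UNIV"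
    by (auto simp: Basis_vec_def)
  have "inj (\<lambda>i::'n. axis i (1::real))"
    by (auto simp: inj_def axis_eq_axis)
  then show ?thesis unfolding B by (simp add: prod.reindex inner_axis)
qed

lemma lborel_orth_wo:
  fixes g :: "(real,'n::{finite,wellorder}) vec \<Rightarrow> (real,'n) vec"
  assumes g: "orthogonal_transformation g"
  shows "distr lborel borel g = lborel"
proof (rule lborel_eqI[symmetric])
  have lin: "linear g" using g orthogonal_transformation_linear by blast
  have gm: "g \<in> borel_measurable borel" by (rule linear_borel[OF lin])
  define h where "h = inv g"
  have h: "orthogonal_transformation h" unfolding h_def by (rule orthogonal_transformation_inv[OF g])
  have hm: "h \<in> borel_measurable borel"
    by (rule linear_borel) (use h orthogonal_transformation_linear in blast)
  have bij: "bij g" using g orthogonal_transformation_bij by blast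
  fix l u :: "(real,'n) vec"
  let ?B = "box l u"
  have pre: "g -` ?B = h ` ?B" unfolding h_def by (rule bij_vimage_eq_inv_image[OF bij])
  have Bl: "?B \<in> lmeasurable" by (simp add: bounded_set_imp_lmeasurable)
  have hBl: "h ` ?B \<in> lmeasurable" by (rule measurable_orthogonal_image[OF h Bl])
  have hBs: "h ` ?B \<in> sets borel" 
    using measurable_sets_borel[OF gm, of ?B] pre by simp
  have "emeasure (distr lborel borel g) ?B = emeasure lborel (h ` ?B)"
    using gm pre by (simp add: emeasure_distr)
  also have "\<dots> = emeasure lebesgue (h ` ?B)" using hBs by simp
  also have "\<dots> = ennreal (measure lebesgue (h ` ?B))"
    using hBl by (simp add: emeasure_eq_measure2)
  also have "\<dots> = ennreal (measure lebesgue ?B)"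
    using measure_orthogonal_image[OF h Bl] by simp
  also have "\<dots> = emeasure lebesgue ?B"
    using Bl by (simp add: emeasure_eq_measure2)
  also have "\<dots> = emeasure lborel ?B" by simp
  finally show "(\<And>b. b \<in> Basis \<Longrightarrow> l \<bullet> b \<le> u \<bullet> b) \<Longrightarrow> emeasure (distr lborel borel g) ?B = (\<Prod>b\<in>Basis. (u - l) \<bullet> b)"
    by simp
qed simp

lemma lborel_orth:
  fixes f :: "real^'d \<Rightarrow> real^'d"
  assumes f: "orthogonal_transformation f"
  shows "distr lborel borel f = lborel"
proof -
  obtain \<sigma> :: "'d wo \<Rightarrow> 'd" where \<sigma>: "bij \<sigma>"
    using finite_same_card_bij[of "UNIV :: 'd wo set" "UNIV :: 'd set"] card_wo by auto
  define \<tau> where "\<tau> = inv \<sigma>"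
  have \<tau>: "bij \<tau>" unfolding \<tau>_def using \<sigma> bij_imp_bij_inv by blast
  have st[simp]: "\<sigma> (\<tau> i) = i" for i unfolding \<tau>_def using \<sigma> by (meson bij_inv_eq_iff)
  have ts[simp]: "\<tau> (\<sigma> j) = j" for j unfolding \<tau>_def using \<sigma> by (simp add: bij_is_inj)
  define Tr :: "real^'d \<Rightarrow> real^'d wo" where "Tr x = (\<chi> j. x $ \<sigma> j)" for x
  define Tr' :: "real^'d wo \<Rightarrow> real^'d" where "Tr' y = (\<chi> i. y $ \<tau> i)" for y
  have TT'[simp]: "Tr (Tr' y) = y" for y by (simp add: Tr_def Tr'_def vec_eq_iff)
  have T'T[simp]: "Tr' (Tr x) = x" for x by (simp add: Tr_def Tr'_def vec_eq_iff)
  have linT: "linear Tr" by (rule linearI) (simp_all add: Tr_def vec_eq_iff)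
  have linT': "linear Tr'" by (rule linearI) (simp_all add: Tr'_def vec_eq_iff)
  have Tm[measurable]: "Tr \<in> borel_measurable borel" by (rule linear_borel[OF linT])
  have T'm[measurable]: "Tr' \<in> borel_measurable borel" by (rule linear_borel[OF linT'])
  have innT: "Tr x \<bullet> Tr y = x \<bullet> y" for x y
  proof -
    have "Tr x \<bullet> Tr y = (\<Sum>j\<in>UNIV. x $ \<sigma> j * y $ \<sigma> j)" by (simp add: inner_vec_def Tr_def)
    also have "\<dots> = (\<Sum>i\<in>UNIV. x $ i * y $ i)"
      using sum.reindex_bij_betw[OF \<sigma>, of "\<lambda>i. x $ i * y $ i"] by simp
    finally show ?thesis by (simp add: inner_vec_def)
  qed
  have innT': "Tr' x \<bullet> Tr' y = x \<bullet> y" for x y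
    by (metis TT' innT)
  have D1: "distr lborel borel Tr = lborel"
  proof (rule lborel_eqI[symmetric])
    fix l u :: "real^'d wo"
    assume le: "\<And>b. b \<in> Basis \<Longrightarrow> l \<bullet> b \<le> u \<bullet> b"
    have le': "l $ i \<le> u $ i" for i using le[of "axis i 1"] by (auto simp: Basis_vec_def inner_axis)
    have pre: "Tr -` box l u = box (Tr' l) (Tr' u)"
    proof -
      have "x \<in> Tr -` box l u \<longleftrightarrow> x \<in> box (Tr' l) (Tr' u)" for x
      proof -
        have "x \<in> Tr -` box l u \<longleftrightarrow> (\<forall>j. l $ j < x $ \<sigma> j \<and> x $ \<sigma> j < u $ j)"
          by (simp add: mem_box_cart Tr_def)
        also have "\<dots> \<longleftrightarrow> (\<forall>i. l $ \<tau> i < x $ i \<and> x $ i < u $ \<tau> i)"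
          by (metis st ts)
        finally show ?thesis by (simp add: mem_box_cart Tr'_def)
      qed
      then show ?thesis by blast
    qed
    have "emeasure (distr lborel borel Tr) (box l u) = emeasure lborel (box (Tr' l) (Tr' u))"
      by (simp add: emeasure_distr pre)
    also have "\<dots> = (\<Prod>b\<in>Basis. (Tr' u - Tr' l) \<bullet> b)"
      by (rule emeasure_lborel_box) (simp add: Basis_vec_def inner_axis Tr'_def le' ; fail | auto simp: Basis_vec_def inner_axis Tr'_def le')
    also have "\<dots> = (\<Prod>i\<in>UNIV. u $ \<tau> i - l $ \<tau> i)" by (simp add: prod_Basis_vec Tr'_def)
    also have "\<dots> = (\<Prod>j\<in>UNIV. u $ j - l $ j)"
      using prod.reindex_bij_betw[OF \<tau>, of "\<lambda>j. u $ j - l $ j"] by simp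
    also have "\<dots> = (\<Prod>b\<in>Basis. (u - l) \<bullet> b)" by (simp add: prod_Basis_vec)
    finally show "emeasure (distr lborel borel Tr) (box l u) = (\<Prod>b\<in>Basis. (u - l) \<bullet> b)" .
  qed simp
  have D2: "distr lborel borel Tr' = (lborel :: (real^'d) measure)"
  proof -
    have "distr lborel borel Tr' = distr (distr lborel borel Tr) borel Tr'" by (simp add: D1)
    also have "\<dots> = distr lborel borel (Tr' \<circ> Tr)" by (simp add: distr_distr)
    also have "\<dots> = distr lborel borel (\<lambda>x. x)" by (simp add: comp_def)
    also have "\<dots> = lborel" by (simp add: distr_id2)
    finally show ?thesis .
  qed
  define g where "g = Tr \<circ> f \<circ> Tr'"
  have linf: "linear f" using f orthogonal_transformation_linear by blast
  have fm[measurable]: "f \<in> borel_measurable borel" by (rule linear_borel[OF linf])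
  have g: "orthogonal_transformation g"
    unfolding orthogonal_transformation_def g_def
    using linf linT linT' f
    by (auto intro!: linear_compose simp: innT innT' orthogonal_transformation_def)
  have gm[measurable]: "g \<in> borel_measurable borel" unfolding g_def by simp
  have fT': "f \<circ> Tr' = Tr' \<circ> g" by (simp add: g_def fun_eq_iff)
  have "distr lborel borel f = distr (distr lborel borel Tr') borel f" by (simp add: D2)
  also have "\<dots> = distr lborel borel (f \<circ> Tr')" by (simp add: distr_distr)
  also have "\<dots> = distr lborel borel (Tr' \<circ> g)" by (simp add: fT')
  also have "\<dots> = distr (distr lborel borel g) borel Tr'" by (simp add: distr_distr)
  also have "\<dots> = lborel" by (simp add: lborel_orth_wo[OF g] D2)
  finally show ?thesis .
qed


abbreviation "UB \<equiv> uniform_measure lborel (ball (0::real^'d) 1)"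

lemma ball_pos: "emeasure lborel (ball (0::real^'d) 1) \<noteq> 0"
proof -
  have "unit_ball_vol (real CARD('d)) > 0" by (rule unit_ball_vol_pos) simp
  then have "unit_ball_vol (real CARD('d)) \<noteq> 0" by linarith
  then show ?thesis by (simp add: emeasure_ball)
qed

lemma ball_fin: "emeasure lborel (ball (0::real^'d) 1) \<noteq> \<infinity>"
  using emeasure_lborel_ball_finite by (metis less_irrefl)

lemma UB_prob: "prob_space (UB :: (real^'d) measure)"
  by (rule prob_space_uniform_measure[OF ball_pos ball_fin])

lemma sets_UB[simp]: "sets (UB :: (real^'d) measure) = sets borel" by simp

lemma sets_S[simp, measurable_cong]: "sets (sphere_uniform :: (real^'d) measure) = sets borel"
  by (simp add: sphere_uniform_def)

lemma space_S[simp]: "space (sphere_uniform :: (real^'d) measure) = UNIV"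
  by (simp add: sphere_uniform_def)

lemma S_prob: "prob_space (sphere_uniform :: (real^'d) measure)"
  unfolding sphere_uniform_def
  by (rule prob_space.prob_space_distr[OF UB_prob]) measurable

lemma UB_orth:
  fixes f :: "real^'d \<Rightarrow> real^'d"
  assumes f: "orthogonal_transformation f"
  shows "distr UB borel f = UB"
proof (rule measure_eqI)
  have linf: "linear f" using f orthogonal_transformation_linear by blast
  have fm[measurable]: "f \<in> borel_measurable borel" by (rule linear_borel[OF linf])
  show "sets (distr UB borel f) = sets UB" by simp
  fix A assume "A \<in> sets (distr UB borel f)"
  then have A[measurable]: "A \<in> sets borel" by simp
  have nf: "norm (f x) = norm x" for x using f orthogonal_transformation_norm by blast
  have eq: "f -` A \<inter> ball 0 1 = f -` (A \<inter> ball 0 1)" by (auto simp: nf)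
  have "emeasure lborel (f -` (A \<inter> ball 0 1)) = emeasure (distr lborel borel f) (A \<inter> ball 0 1)"
    by (simp add: emeasure_distr)
  also have "\<dots> = emeasure lborel (A \<inter> ball 0 1)" by (simp add: lborel_orth[OF f])
  finally have *: "emeasure lborel (f -` (A \<inter> ball 0 1)) = emeasure lborel (A \<inter> ball 0 1)" .
  have fA[measurable]: "f -` A \<in> sets borel" using measurable_sets_borel[OF fm A] by simp
  have "emeasure (distr UB borel f) A = emeasure UB (f -` A)"
    by (simp add: emeasure_distr)
  also have "\<dots> = emeasure lborel (f -` A \<inter> ball 0 1) / emeasure lborel (ball (0::real^'d) 1)"
    by (subst emeasure_uniform_measure) (auto simp: Int_commute)
  also have "\<dots> = emeasure lborel (A \<inter> ball 0 1) / emeasure lborel (ball (0::real^'d) 1)"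
    by (simp only: eq *)
  also have "\<dots> = emeasure UB A"
    by (subst emeasure_uniform_measure) (auto simp: Int_commute)
  finally show "emeasure (distr UB borel f) A = emeasure UB A" .
qed

lemma S_orth:
  fixes f :: "real^'d \<Rightarrow> real^'d"
  assumes f: "orthogonal_transformation f"
  shows "distr sphere_uniform borel f = sphere_uniform"
proof -
  have linf: "linear f" using f orthogonal_transformation_linear by blast
  have fm[measurable]: "f \<in> borel_measurable borel" by (rule linear_borel[OF linf])
  have nf: "norm (f x) = norm x" for x using f orthogonal_transformation_norm by blast
  have comm: "f \<circ> (\<lambda>x. x /\<^sub>R norm x) = (\<lambda>x. x /\<^sub>R norm x) \<circ> f"
    by (auto simp: fun_eq_iff nf linear_scale[OF linf])
  have "distr sphere_uniform borel f = distr UB borel (f \<circ> (\<lambda>x. x /\<^sub>R norm x))"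
    unfolding sphere_uniform_def by (subst distr_distr) auto
  also have "\<dots> = distr UB borel ((\<lambda>x. x /\<^sub>R norm x) \<circ> f)" by (simp add: comm)
  also have "\<dots> = distr (distr UB borel f) borel (\<lambda>x. x /\<^sub>R norm x)"
    by (subst distr_distr) auto
  also have "\<dots> = sphere_uniform" by (simp add: UB_orth[OF f] sphere_uniform_def)
  finally show ?thesis .
qed

lemma S_integral_orth:
  fixes f :: "real^'d \<Rightarrow> real^'d" and h :: "real^'d \<Rightarrow> real"
  assumes f: "orthogonal_transformation f" and h[measurable]: "h \<in> borel_measurable borel"
  shows "(\<integral>x. h (f x) \<partial>sphere_uniform) = (\<integral>x. h x \<partial>sphere_uniform)"
proof -
  have linf: "linear f" using f orthogonal_transformation_linear by blast
  have fm[measurable]: "f \<in> borel_measurable borel" by (rule linear_borel[OF linf])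
  have "(\<integral>x. h x \<partial>sphere_uniform) = (\<integral>x. h x \<partial>distr sphere_uniform borel f)"
    by (simp add: S_orth[OF f])
  also have "\<dots> = (\<integral>x. h (f x) \<partial>sphere_uniform)"
    by (rule integral_distr) auto
  finally show ?thesis by simp
qed

lemma S_AE_cone:
  fixes A :: "(real^'d) set"
  assumes A[measurable]: "A \<in> sets borel" and neg: "negligible A"
    and cone: "\<And>x. x \<noteq> 0 \<Longrightarrow> x /\<^sub>R norm x \<in> A \<Longrightarrow> x \<in> A"
  shows "AE c in sphere_uniform. c \<notin> A \<and> norm c = 1"
proof -
  have neg0: "negligible (insert 0 A)" using neg negligible_insert by blast
  have Ab: "insert 0 A \<in> sets lborel" by simp
  have "insert 0 A \<in> null_sets lebesgue" using neg0 negligible_iff_null_sets by blast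
  then have "insert 0 A \<in> null_sets lborel" using null_sets_completion_iff[OF Ab] by blast
  then have ae: "AE x in lborel. x \<notin> insert 0 A" by (rule AE_not_in)
  have "AE x in UB. x /\<^sub>R norm x \<notin> A \<and> norm (x /\<^sub>R norm x) = 1"
  proof (rule AE_uniform_measureI)
    show "AE x in lborel. x \<in> ball 0 1 \<longrightarrow> x /\<^sub>R norm x \<notin> A \<and> norm (x /\<^sub>R norm x) = 1"
      using ae
    proof eventually_elim
      case (elim x)
      then show ?case using cone[of x] by auto
    qed
  qed simp
  then show ?thesis
    unfolding sphere_uniform_def by (subst AE_distr_iff) auto
qed


definition Habs :: "real \<Rightarrow> real" where "Habs x = integral {-1..x} (\<lambda>s. \<bar>sin s\<bar>)"

lemma Habs_deriv:
  assumes "-1 < x" "x < 100"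
  shows "(Habs has_real_derivative \<bar>sin x\<bar>) (at x)"
proof -
  have c: "continuous_on {-1..100::real} (\<lambda>s. \<bar>sin s\<bar>)"
    by (intro continuous_intros)
  have "((\<lambda>x. integral {-1..x} (\<lambda>s. \<bar>sin s\<bar>)) has_real_derivative \<bar>sin x\<bar>) (at x within {-1..100})"
    by (rule integral_has_real_derivative[OF c]) (use assms in auto)
  moreover have "x \<in> interior {-1..(100::real)}" using assms by simp
  ultimately show ?thesis unfolding Habs_def using at_within_interior by metis
qed

lemma int_sin_0_pi: "integral {0..pi} (\<lambda>s. \<bar>sin s\<bar>) = 2"
proof -
  have "((\<lambda>s. sin s) has_integral (- cos pi) - (- cos 0)) {0..pi}"
    by (rule fundamental_theorem_of_calculus)
       (auto intro!: derivative_eq_intros simp: has_real_derivative_iff_has_vector_derivative[symmetric])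
  then have "((\<lambda>s. sin s) has_integral 2) {0..pi}" by simp
  then have "((\<lambda>s. \<bar>sin s\<bar>) has_integral 2) {0..pi}"
    by (subst (asm) has_integral_cong[where g="\<lambda>s. \<bar>sin s\<bar>"]) (auto simp: sin_ge_zero)
  then show ?thesis by (simp add: integral_unique)
qed

lemma Habs_period:
  assumes "0 \<le> x" "x \<le> 6 * pi"
  shows "Habs (x + pi) - Habs x = 2"
proof -
  have "\<exists>c. \<forall>x\<in>{0..6*pi}. Habs (x + pi) - Habs x = c"
  proof (rule has_field_derivative_zero_constant)
    fix x assume x: "x \<in> {0..6*pi}"
    have "x + pi < 100" using x pi_less_4 by auto
    then have d1: "(Habs has_real_derivative \<bar>sin (x + pi)\<bar>) (at (x + pi))"
      using x pi_gt_zero by (intro Habs_deriv) auto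
    have d2: "(Habs has_real_derivative \<bar>sin x\<bar>) (at x)"
      using x pi_less_4 by (intro Habs_deriv) auto
    have s: "((\<lambda>x. x + pi) has_real_derivative 1) (at x)" by (auto intro!: derivative_eq_intros)
    have "((\<lambda>x. Habs (x + pi) - Habs x) has_real_derivative \<bar>sin (x + pi)\<bar> * 1 - \<bar>sin x\<bar>) (at x)"
      using DERIV_chain2[OF d1 s] d2 by (rule DERIV_diff)
    then show "((\<lambda>x. Habs (x + pi) - Habs x) has_real_derivative 0) (at x within {0..6*pi})"
      by (simp add: has_field_derivative_at_within)
  qed simp
  then obtain c where c: "\<And>x. x \<in> {0..6*pi} \<Longrightarrow> Habs (x + pi) - Habs x = c" by blast
  have "Habs (0 + pi) - Habs 0 = 2"
  proof -
    have i: "(\<lambda>s. \<bar>sin s\<bar>) integrable_on {-1..pi}"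
      by (intro integrable_continuous_interval continuous_intros)
    have "integral {-1..0} (\<lambda>s. \<bar>sin s\<bar>) + integral {0..pi} (\<lambda>s. \<bar>sin s\<bar>) = integral {-1..pi} (\<lambda>s. \<bar>sin s\<bar>)"
      using Henstock_Kurzweil_Integration.integral_combine[OF _ _ i, of 0] pi_gt_zero by simp
    then show ?thesis using int_sin_0_pi by (simp add: Habs_def)
  qed
  with c[of 0] c[of x] assms show ?thesis by auto
qed

lemma int_abs_sin_shift:
  assumes "0 \<le> \<phi>" "\<phi> < 2 * pi"
  shows "((\<lambda>t. \<bar>sin (2 * t + \<phi>)\<bar>) has_integral 4) {0..2*pi}"
proof -
  define G where "G t = Habs (2 * t + \<phi>) / 2" for t
  have "((\<lambda>t. \<bar>sin (2 * t + \<phi>)\<bar>) has_integral G (2*pi) - G 0) {0..2*pi}"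
  proof (rule fundamental_theorem_of_calculus)
    fix t assume t: "t \<in> {0..2*pi}"
    have "2 * t + \<phi> < 100" using t assms pi_less_4 by auto
    then have d: "(Habs has_real_derivative \<bar>sin (2 * t + \<phi>)\<bar>) (at (2 * t + \<phi>))"
      using t assms by (intro Habs_deriv) auto
    have s: "((\<lambda>t. 2 * t + \<phi>) has_real_derivative 2) (at t)" by (auto intro!: derivative_eq_intros)
    have "((\<lambda>t. Habs (2 * t + \<phi>) / 2) has_real_derivative \<bar>sin (2 * t + \<phi>)\<bar> * 2 / 2) (at t)"
      using DERIV_chain2[OF d s] by (rule DERIV_cdivide)
    then have "(G has_real_derivative \<bar>sin (2 * t + \<phi>)\<bar>) (at t)"
      unfolding G_def by simp
    then show "(G has_vector_derivative \<bar>sin (2 * t + \<phi>)\<bar>) (at t within {0..2*pi})"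
      by (simp add: has_real_derivative_iff_has_vector_derivative[symmetric] has_field_derivative_at_within)
  qed (simp)
  moreover have "G (2*pi) - G 0 = 4"
  proof -
    have "Habs (\<phi> + 4 * pi) - Habs \<phi> =
      (Habs (\<phi> + pi) - Habs \<phi>) + (Habs ((\<phi> + pi) + pi) - Habs (\<phi> + pi))
      + (Habs ((\<phi> + 2*pi) + pi) - Habs (\<phi> + 2*pi)) + (Habs ((\<phi> + 3*pi) + pi) - Habs (\<phi> + 3*pi))"
      by (simp add: algebra_simps)
    also have "\<dots> = 8"
    proof -
      have "Habs (\<phi> + pi) - Habs \<phi> = 2" using assms pi_gt_zero by (intro Habs_period) auto
      moreover have "Habs ((\<phi> + pi) + pi) - Habs (\<phi> + pi) = 2" using assms pi_gt_zero by (intro Habs_period) auto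
      moreover have "Habs ((\<phi> + 2*pi) + pi) - Habs (\<phi> + 2*pi) = 2" using assms pi_gt_zero by (intro Habs_period) auto
      moreover have "Habs ((\<phi> + 3*pi) + pi) - Habs (\<phi> + 3*pi) = 2" using assms pi_gt_zero by (intro Habs_period) auto
      ultimately show ?thesis by linarith
    qed
    finally show ?thesis by (simp add: G_def algebra_simps)
  qed
  ultimately show ?thesis by simp
qed

lemma rot_integral:
  fixes \<alpha> \<beta> :: real
  shows "((\<lambda>t. \<bar>(cos t * \<alpha> - sin t * \<beta>) * (sin t * \<alpha> + cos t * \<beta>)\<bar>) has_integral 2 * (\<alpha>\<^sup>2 + \<beta>\<^sup>2)) {0..2*pi}"
proof (cases "\<alpha>\<^sup>2 + \<beta>\<^sup>2 = 0")
  case True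
  then have "\<alpha> = 0" "\<beta> = 0" by (simp_all add: sum_power2_eq_zero_iff)
  then show ?thesis by simp
next
  case False
  define R where "R = \<alpha>\<^sup>2 + \<beta>\<^sup>2"
  have R: "R > 0" using False unfolding R_def by (metis add_nonneg_nonneg less_eq_real_def zero_le_power2)
  have "((\<alpha>\<^sup>2 - \<beta>\<^sup>2) / R)\<^sup>2 + (2 * \<alpha> * \<beta> / R)\<^sup>2 = ((\<alpha>\<^sup>2 - \<beta>\<^sup>2)\<^sup>2 + (2 * \<alpha> * \<beta>)\<^sup>2) / R\<^sup>2"
    by (simp add: power_divide add_divide_distrib)
  also have "(\<alpha>\<^sup>2 - \<beta>\<^sup>2)\<^sup>2 + (2 * \<alpha> * \<beta>)\<^sup>2 = R\<^sup>2" unfolding R_def by (simp add: power2_eq_square algebra_simps)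
  finally have "((\<alpha>\<^sup>2 - \<beta>\<^sup>2) / R)\<^sup>2 + (2 * \<alpha> * \<beta> / R)\<^sup>2 = 1" using R by simp
  then obtain \<phi> where phi: "0 \<le> \<phi>" "\<phi> < 2 * pi" "(\<alpha>\<^sup>2 - \<beta>\<^sup>2) / R = cos \<phi>" "2 * \<alpha> * \<beta> / R = sin \<phi>"
    by (rule sincos_total_2pi)
  have A: "\<alpha>\<^sup>2 - \<beta>\<^sup>2 = R * cos \<phi>" using phi(3) R by (simp add: field_simps)
  have B: "2 * \<alpha> * \<beta> = R * sin \<phi>" using phi(4) R by (simp add: field_simps)
  have eq: "\<bar>(cos t * \<alpha> - sin t * \<beta>) * (sin t * \<alpha> + cos t * \<beta>)\<bar> = (R / 2) * \<bar>sin (2 * t + \<phi>)\<bar>" for t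
  proof -
    have "(cos t * \<alpha> - sin t * \<beta>) * (sin t * \<alpha> + cos t * \<beta>)
        = (\<alpha>\<^sup>2 - \<beta>\<^sup>2) * (2 * sin t * cos t) / 2 + (2 * \<alpha> * \<beta>) * ((cos t)\<^sup>2 - (sin t)\<^sup>2) / 2"
      by (simp add: power2_eq_square field_simps)
    also have "\<dots> = (R / 2) * (cos \<phi> * sin (2 * t) + sin \<phi> * cos (2 * t))"
      unfolding A B sin_double cos_double by (simp add: field_simps)
    also have "\<dots> = (R / 2) * sin (2 * t + \<phi>)" by (simp add: sin_add algebra_simps)
    finally have X: "(cos t * \<alpha> - sin t * \<beta>) * (sin t * \<alpha> + cos t * \<beta>) = (R / 2) * sin (2 * t + \<phi>)" .
    have "\<bar>R / 2\<bar> = R / 2" using R by simp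
    then show ?thesis by (simp only: X abs_mult)
  qed
  have "((\<lambda>t. (R / 2) * \<bar>sin (2 * t + \<phi>)\<bar>) has_integral (R / 2) * 4) {0..2*pi}"
    by (rule has_integral_mult_right[OF int_abs_sin_shift[OF phi(1,2)]])
  moreover have "(R / 2) * 4 = 2 * (\<alpha>\<^sup>2 + \<beta>\<^sup>2)" unfolding R_def by simp
  ultimately show ?thesis unfolding eq by simp
qed


lemma AE_S_norm: "AE c in (sphere_uniform::(real^'d) measure). norm c = 1"
  using S_AE_cone[of "{}"] by simp

lemma S_integrable_bounded:
  fixes h :: "real^'d \<Rightarrow> real"
  assumes h[measurable]: "h \<in> borel_measurable borel" and B: "\<And>c. norm c = 1 \<Longrightarrow> \<bar>h c\<bar> \<le> B"
  shows "integrable sphere_uniform h"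
proof -
  interpret prob_space "sphere_uniform :: (real^'d) measure" by (rule S_prob)
  show ?thesis
  proof (rule integrable_const_bound)
    show "AE x in sphere_uniform. norm (h x) \<le> B"
      using AE_S_norm by eventually_elim (simp add: B)
  qed simp
qed

lemma S_sq_eq:
  fixes a b :: "real^'d"
  assumes "norm a = norm b"
  shows "(\<integral>c. (c \<bullet> a)\<^sup>2 \<partial>sphere_uniform) = (\<integral>c. (c \<bullet> b)\<^sup>2 \<partial>sphere_uniform)"
proof -
  obtain f where f: "orthogonal_transformation f" "f a = b"
    using orthogonal_transformation_exists[OF assms] by blast
  have "(\<integral>c. (c \<bullet> b)\<^sup>2 \<partial>sphere_uniform) = (\<integral>c. (f c \<bullet> b)\<^sup>2 \<partial>sphere_uniform)"
    by (rule S_integral_orth[OF f(1), of "\<lambda>x. (x \<bullet> b)\<^sup>2", symmetric]) measurable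
  also have "\<dots> = (\<integral>c. (c \<bullet> a)\<^sup>2 \<partial>sphere_uniform)"
    using f by (simp add: orthogonal_transformation_def flip: f(2))
  finally show ?thesis by simp
qed

lemma S_sq:
  fixes a :: "real^'d"
  assumes "norm a = 1"
  shows "(\<integral>c. (c \<bullet> a)\<^sup>2 \<partial>sphere_uniform) = 1 / real CARD('d)"
proof -
  interpret prob_space "sphere_uniform :: (real^'d) measure" by (rule S_prob)
  define X where "X = (\<integral>c. (c \<bullet> a)\<^sup>2 \<partial>(sphere_uniform :: (real^'d) measure))"
  have k: "(\<integral>c. (c $ k)\<^sup>2 \<partial>(sphere_uniform :: (real^'d) measure)) = X" for k
    using S_sq_eq[of "axis k 1" a] assms by (simp add: X_def inner_axis)
  have int: "integrable sphere_uniform (\<lambda>c::real^'d. (c $ k)\<^sup>2)" for k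
  proof (rule S_integrable_bounded[where B=1])
    fix c :: "real^'d" assume "norm c = 1"
    then have "\<bar>c $ k\<bar> \<le> 1" using component_le_norm_cart[of c k] by simp
    then show "\<bar>(c $ k)\<^sup>2\<bar> \<le> 1" by (simp add: abs_square_le_1)
  qed measurable
  have "(\<Sum>k\<in>UNIV. (\<integral>c. (c $ k)\<^sup>2 \<partial>(sphere_uniform :: (real^'d) measure))) = (\<integral>c. (\<Sum>k\<in>UNIV. (c $ k)\<^sup>2) \<partial>(sphere_uniform :: (real^'d) measure))"
    using Bochner_Integration.integral_sum[of UNIV "sphere_uniform :: (real^'d) measure" "\<lambda>k c. (c $ k)\<^sup>2", OF int] by simp
  also have "\<dots> = (\<integral>c. 1 \<partial>(sphere_uniform :: (real^'d) measure))"
  proof (rule integral_cong_AE)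
    show "AE c in sphere_uniform. (\<Sum>k\<in>UNIV. ((c::real^'d) $ k)\<^sup>2) = 1"
      using AE_S_norm
    proof eventually_elim
      case (elim c)
      have "(\<Sum>k\<in>UNIV. (c $ k)\<^sup>2) = c \<bullet> c" by (simp add: inner_vec_def power2_eq_square)
      also have "\<dots> = (norm c)\<^sup>2" by (simp add: power2_norm_eq_inner)
      finally show ?case using elim by simp
    qed
  qed measurable
  also have "\<dots> = 1" using prob_space by simp
  finally have "real CARD('d) * X = 1" using k by simp
  then show ?thesis unfolding X_def[symmetric] by (simp add: field_simps)
qed

definition rotab :: "real^'d \<Rightarrow> real^'d \<Rightarrow> real \<Rightarrow> real^'d \<Rightarrow> real^'d" where
  "rotab a b t x = x + ((cos t - 1) * (x \<bullet> a) - sin t * (x \<bullet> b)) *\<^sub>R a + (sin t * (x \<bullet> a) + (cos t - 1) * (x \<bullet> b)) *\<^sub>R b"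

lemma rot_identity:
  fixes c s \<alpha> \<beta> \<alpha>' \<beta>' :: real
  assumes "c\<^sup>2 + s\<^sup>2 = 1"
  shows "((c - 1) * \<alpha>' - s * \<beta>') * \<alpha> + (s * \<alpha>' + (c - 1) * \<beta>') * \<beta> + ((c - 1) * \<alpha> - s * \<beta>) * \<alpha>'
    + (s * \<alpha> + (c - 1) * \<beta>) * \<beta>' + ((c - 1) * \<alpha> - s * \<beta>) * ((c - 1) * \<alpha>' - s * \<beta>')
    + (s * \<alpha> + (c - 1) * \<beta>) * (s * \<alpha>' + (c - 1) * \<beta>') = 0"
proof -
  have "((c - 1) * \<alpha>' - s * \<beta>') * \<alpha> + (s * \<alpha>' + (c - 1) * \<beta>') * \<beta> + ((c - 1) * \<alpha> - s * \<beta>) * \<alpha>'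
    + (s * \<alpha> + (c - 1) * \<beta>) * \<beta>' + ((c - 1) * \<alpha> - s * \<beta>) * ((c - 1) * \<alpha>' - s * \<beta>')
    + (s * \<alpha> + (c - 1) * \<beta>) * (s * \<alpha>' + (c - 1) * \<beta>') = (\<alpha> * \<alpha>' + \<beta> * \<beta>') * (c\<^sup>2 + s\<^sup>2 - 1)"
    by (simp add: power2_eq_square algebra_simps)
  then show ?thesis using assms by simp
qed

lemma rot_orth:
  fixes a b :: "real^'d"
  assumes aa: "a \<bullet> a = 1" and bb: "b \<bullet> b = 1" and ab: "a \<bullet> b = 0"
  shows "orthogonal_transformation (rotab a b t)"
  unfolding orthogonal_transformation_def
proof (intro conjI allI)
  show "linear (rotab a b t)"
    by (rule linearI) (simp_all add: rotab_def inner_add_left algebra_simps scaleR_add_left)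
  fix v w :: "real^'d"
  have ba: "b \<bullet> a = 0" using ab by (simp add: inner_commute)
  define p where "p x = (cos t - 1) * (x \<bullet> a) - sin t * (x \<bullet> b)" for x
  define r where "r x = sin t * (x \<bullet> a) + (cos t - 1) * (x \<bullet> b)" for x
  have R: "rotab a b t x = x + p x *\<^sub>R a + r x *\<^sub>R b" for x by (simp add: rotab_def p_def r_def)
  have "rotab a b t v \<bullet> rotab a b t w = v \<bullet> w + p w * (v \<bullet> a) + r w * (v \<bullet> b) + p v * (w \<bullet> a)
      + p v * p w + r v * (w \<bullet> b) + r v * r w"
    unfolding R by (simp add: inner_add_left inner_add_right aa bb ab ba inner_commute[of a w] inner_commute[of b w] algebra_simps)
  also have "\<dots> = v \<bullet> w"
    using rot_identity[of "cos t" "sin t" "v \<bullet> a" "v \<bullet> b" "w \<bullet> a" "w \<bullet> b"]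
    unfolding p_def r_def by (simp add: algebra_simps)
  finally show "rotab a b t v \<bullet> rotab a b t w = v \<bullet> w" .
qed

lemma rot_a: "a \<bullet> a = 1 \<Longrightarrow> b \<bullet> b = 1 \<Longrightarrow> a \<bullet> b = 0 \<Longrightarrow> rotab a b t x \<bullet> a = cos t * (x \<bullet> a) - sin t * (x \<bullet> b)"
  by (simp add: rotab_def inner_add_left inner_commute[of b a] algebra_simps)

lemma rot_b: "a \<bullet> a = 1 \<Longrightarrow> b \<bullet> b = 1 \<Longrightarrow> a \<bullet> b = 0 \<Longrightarrow> rotab a b t x \<bullet> b = sin t * (x \<bullet> a) + cos t * (x \<bullet> b)"
  by (simp add: rotab_def inner_add_left algebra_simps)

lemma S_sq_int:
  fixes a :: "real^'d"
  shows "integrable sphere_uniform (\<lambda>c. (c \<bullet> a)\<^sup>2)"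
proof (rule S_integrable_bounded[where B="(norm a)\<^sup>2"])
  fix c :: "real^'d" assume "norm c = 1"
  then have "\<bar>c \<bullet> a\<bar> \<le> norm a" using Cauchy_Schwarz_ineq2[of c a] by simp
  then have "\<bar>c \<bullet> a\<bar>\<^sup>2 \<le> (norm a)\<^sup>2" by (rule power_mono) simp
  then show "\<bar>(c \<bullet> a)\<^sup>2\<bar> \<le> (norm a)\<^sup>2" by simp
qed measurable

lemma S_cross:
  fixes a b :: "real^'d"
  assumes aa: "a \<bullet> a = 1" and bb: "b \<bullet> b = 1" and ab: "a \<bullet> b = 0"
  shows "(\<integral>c. \<bar>c \<bullet> a\<bar> * \<bar>c \<bullet> b\<bar> \<partial>sphere_uniform) = 2 / (pi * real CARD('d))"
proof -
  interpret S: prob_space "sphere_uniform :: (real^'d) measure" by (rule S_prob)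
  define T where "T = restrict_space (lborel :: real measure) {0..2*pi}"
  have space_T: "space T = {0..2*pi}" unfolding T_def by simp
  have finT: "finite_measure T" unfolding T_def
    by (rule finite_measureI) (simp add: emeasure_restrict_space)
  interpret T: finite_measure T by (rule finT)
  interpret TS: pair_sigma_finite T "sphere_uniform :: (real^'d) measure"
    by (intro pair_sigma_finite.intro finite_measure.sigma_finite_measure finT S.finite_measure_axioms)
  have na: "norm a = 1" using aa by (simp add: norm_eq_1)
  have nb: "norm b = 1" using bb by (simp add: norm_eq_1)
  define h where "h x = \<bar>x \<bullet> a\<bar> * \<bar>x \<bullet> b\<bar>" for x :: "real^'d"
  have hm[measurable]: "h \<in> borel_measurable borel" unfolding h_def by measurable
  define G where "G t c = \<bar>(cos t * (c \<bullet> a) - sin t * (c \<bullet> b)) * (sin t * (c \<bullet> a) + cos t * (c \<bullet> b))\<bar>" for t and c :: "real^'d"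
  have GR: "G t c = h (rotab a b t c)" for t c
    by (simp add: G_def h_def rot_a[OF aa bb ab] rot_b[OF aa bb ab] abs_mult)
  define I where "I = (\<integral>c. h c \<partial>(sphere_uniform :: (real^'d) measure))"
  have hint: "integrable sphere_uniform h"
  proof (rule S_integrable_bounded[where B=1])
    fix c :: "real^'d" assume "norm c = 1"
    then have "\<bar>c \<bullet> a\<bar> \<le> 1" "\<bar>c \<bullet> b\<bar> \<le> 1"
      using Cauchy_Schwarz_ineq2[of c a] Cauchy_Schwarz_ineq2[of c b] na nb by simp_all
    then show "\<bar>h c\<bar> \<le> 1" unfolding h_def by (simp add: abs_mult mult_le_one)
  qed measurable
  have rm[measurable]: "rotab a b t \<in> borel_measurable borel" for t
    using rot_orth[OF aa bb ab] orthogonal_transformation_linear linear_borel by blast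
  have Gt: "(\<integral>c. G t c \<partial>sphere_uniform) = I" for t
    unfolding GR I_def by (rule S_integral_orth[OF rot_orth[OF aa bb ab] hm])
  have Gint: "integrable sphere_uniform (G t)" for t
  proof -
    have "integrable (distr sphere_uniform borel (rotab a b t)) h"
      using hint by (simp add: S_orth[OF rot_orth[OF aa bb ab]])
    then have "integrable sphere_uniform (\<lambda>c. h (rotab a b t c))"
      by (subst (asm) integrable_distr_eq) auto
    then show ?thesis unfolding GR[abs_def] by simp
  qed
  have Gm: "(\<lambda>(t, c). G t c) \<in> borel_measurable (T \<Otimes>\<^sub>M sphere_uniform)"
  proof -
    have cG: "continuous_on UNIV (\<lambda>p::real \<times> (real^'d). G (fst p) (snd p))"
      unfolding G_def by (intro continuous_intros)
    then have "(\<lambda>p::real \<times> (real^'d). G (fst p) (snd p)) \<in> borel_measurable borel"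
      by (rule borel_measurable_continuous_onI)
    then have m1: "(\<lambda>p::real \<times> (real^'d). G (fst p) (snd p)) \<in> borel_measurable (borel \<Otimes>\<^sub>M borel)"
      by (simp add: borel_prod)
    have i1: "(\<lambda>x::real. x) \<in> T \<rightarrow>\<^sub>M borel" unfolding T_def
      by (rule measurable_restrict_space1) simp
    have i2: "(\<lambda>x::real^'d. x) \<in> sphere_uniform \<rightarrow>\<^sub>M borel" by simp
    have "(\<lambda>p. (fst p, snd p)) \<in> T \<Otimes>\<^sub>M sphere_uniform \<rightarrow>\<^sub>M (borel \<Otimes>\<^sub>M borel :: (real \<times> (real^'d)) measure)"
      by (intro measurable_Pair measurable_compose[OF measurable_fst i1] measurable_compose[OF measurable_snd i2])
    then have "(\<lambda>p. G (fst p) (snd p)) \<in> borel_measurable (T \<Otimes>\<^sub>M sphere_uniform)"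
      using measurable_compose[OF _ m1] by simp
    then show ?thesis by (simp add: case_prod_beta')
  qed
  have Gnn: "G t c \<ge> 0" for t c unfolding G_def by simp
  have int2: "integrable (T \<Otimes>\<^sub>M sphere_uniform) (\<lambda>(t, c). G t c)"
  proof (rule TS.Fubini_integrable)
    show "(\<lambda>(t, c). G t c) \<in> borel_measurable (T \<Otimes>\<^sub>M sphere_uniform)" by (rule Gm)
    have "(\<lambda>x. LINT y|sphere_uniform. norm (case (x, y) of (t, c) \<Rightarrow> G t c)) = (\<lambda>x. I)"
      using Gt Gnn by (simp add: abs_of_nonneg)
    then show "integrable T (\<lambda>x. LINT y|sphere_uniform. norm (case (x, y) of (t, c) \<Rightarrow> G t c))"
      by simp
    show "AE x in T. integrable sphere_uniform (\<lambda>y. case (x, y) of (t, c) \<Rightarrow> G t c)"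
      using Gint by simp
  qed
  have inner: "(\<integral>t. G t c \<partial>T) = 2 * ((c \<bullet> a)\<^sup>2 + (c \<bullet> b)\<^sup>2)" for c
  proof -
    have cont: "continuous_on {0..2*pi} (\<lambda>t. G t c)" unfolding G_def by (intro continuous_intros)
    have si: "set_integrable lborel {0..2*pi} (\<lambda>t. G t c)"
      unfolding set_integrable_def by (rule borel_integrable_compact[OF compact_Icc cont])
    have "(\<integral>t. G t c \<partial>T) = set_lebesgue_integral lborel {0..2*pi} (\<lambda>t. G t c)"
      unfolding T_def set_lebesgue_integral_def by (subst integral_restrict_space) auto
    also have "\<dots> = integral {0..2*pi} (\<lambda>t. G t c)"
      by (rule set_borel_integral_eq_integral(2)[OF si])
    also have "\<dots> = 2 * ((c \<bullet> a)\<^sup>2 + (c \<bullet> b)\<^sup>2)"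
      unfolding G_def by (rule integral_unique[OF rot_integral])
    finally show ?thesis .
  qed
  have "(\<integral>c. (\<integral>t. G t c \<partial>T) \<partial>sphere_uniform) = (\<integral>t. (\<integral>c. G t c \<partial>sphere_uniform) \<partial>T)"
    using TS.Fubini_integral[of G] int2 by simp
  also have "\<dots> = (\<integral>t. I \<partial>T)" by (simp add: Gt)
  also have "\<dots> = 2 * pi * I"
    by (simp add: T_def measure_restrict_space space_restrict_space)
  finally have eq1: "(\<integral>c. (\<integral>t. G t c \<partial>T) \<partial>sphere_uniform) = 2 * pi * I" .
  have "(\<integral>c. (\<integral>t. G t c \<partial>T) \<partial>sphere_uniform) = (\<integral>c. 2 * ((c \<bullet> a)\<^sup>2 + (c \<bullet> b)\<^sup>2) \<partial>(sphere_uniform :: (real^'d) measure))"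
    by (simp add: inner)
  also have "\<dots> = 2 * ((\<integral>c. (c \<bullet> a)\<^sup>2 \<partial>(sphere_uniform :: (real^'d) measure)) + (\<integral>c. (c \<bullet> b)\<^sup>2 \<partial>sphere_uniform))"
    using S_sq_int[of a] S_sq_int[of b] by simp
  also have "\<dots> = 4 / real CARD('d)" using S_sq[OF na] S_sq[OF nb] by simp
  finally have "2 * pi * I = 4 / real CARD('d)" using eq1 by simp
  then have "I = 2 / (pi * real CARD('d))" by (simp add: field_simps)
  then show ?thesis unfolding I_def h_def .
qed


abbreviation gsv :: "(nat \<Rightarrow> 'a::real_inner) \<Rightarrow> nat \<Rightarrow> nat \<Rightarrow> 'a" where
  "gsv w k i \<equiv> gram_schmidt_list w k ! i"

definition gsy :: "(nat \<Rightarrow> 'a::real_inner) \<Rightarrow> nat \<Rightarrow> 'a" where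
  "gsy w k = w k - (\<Sum>j<k. (w k \<bullet> gsv w k j) *\<^sub>R gsv w k j)"

lemma sum_list_map_nth: "sum_list (map f xs) = (\<Sum>j<length xs. f (xs ! j))"
  by (simp add: sum_list_sum_nth atLeast0LessThan)

lemma gs_length[simp]: "length (gram_schmidt_list w k) = k"
  by (induction k) (simp_all add: Let_def)

lemma gs_Suc_lt: "i < k \<Longrightarrow> gsv w (Suc k) i = gsv w k i"
  by (simp add: Let_def nth_append)

lemma gs_Suc_last: "gsv w (Suc k) k = gsy w k /\<^sub>R norm (gsy w k)"
  by (simp add: Let_def nth_append gsy_def sum_list_map_nth)

lemma gs_mono: "i < k \<Longrightarrow> k \<le> m \<Longrightarrow> gsv w m i = gsv w k i"
proof (induction m)
  case 0 then show ?case by simp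
next
  case (Suc m)
  show ?case
  proof (cases "k = Suc m")
    case False
    then have "k \<le> m" using Suc.prems by simp
    then show ?thesis using Suc gs_Suc_lt[of i m w] by simp
  qed simp
qed

lemma gs_local: "(\<And>j. j < k \<Longrightarrow> w j = w' j) \<Longrightarrow> gram_schmidt_list w k = gram_schmidt_list w' k"
proof (induction k)
  case 0 then show ?case by simp
next
  case (Suc k)
  then have "gram_schmidt_list w k = gram_schmidt_list w' k" by simp
  moreover have "w k = w' k" using Suc.prems by simp
  ultimately show ?case by (simp add: Let_def)
qed

lemma linear_sum_list: "linear f \<Longrightarrow> f (sum_list xs) = sum_list (map f xs)"
  by (induction xs) (simp_all add: linear_add linear_0)

lemma gs_equiv:
  fixes f :: "'a::euclidean_space \<Rightarrow> 'a"
  assumes f: "orthogonal_transformation f"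
  shows "gram_schmidt_list (\<lambda>i. f (w i)) k = map f (gram_schmidt_list w k)"
proof (induction k)
  case 0 then show ?case by simp
next
  case (Suc k)
  have lin: "linear f" using f orthogonal_transformation_linear by blast
  have inn: "f x \<bullet> f y = x \<bullet> y" for x y using f by (simp add: orthogonal_transformation_def)
  have nf: "norm (f x) = norm x" for x using f orthogonal_transformation_norm by blast
  define us where "us = gram_schmidt_list w k"
  define y where "y = w k - sum_list (map (\<lambda>u. (w k \<bullet> u) *\<^sub>R u) us)"
  have "f (w k) - sum_list (map (\<lambda>u. (f (w k) \<bullet> u) *\<^sub>R u) (map f us)) = f y"
    unfolding y_def by (simp add: linear_diff[OF lin] linear_sum_list[OF lin] o_def inn linear_cmul[OF lin])
  then show ?case
    using Suc.IH by (simp add: Let_def us_def[symmetric] y_def[symmetric] linear_cmul[OF lin] nf)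
qed

lemma gs_orthonormal:
  assumes "\<And>k. k < q \<Longrightarrow> gsy w k \<noteq> 0"
  shows "\<And>i j. i < q \<Longrightarrow> j < q \<Longrightarrow> gsv w q i \<bullet> gsv w q j = (if i = j then 1 else 0)"
  using assms
proof (induction q)
  case 0 then show ?case by simp
next
  case (Suc k)
  have IH: "\<And>i j. i < k \<Longrightarrow> j < k \<Longrightarrow> gsv w k i \<bullet> gsv w k j = (if i = j then 1 else 0)"
    using Suc.IH Suc.prems(3) by simp
  have y0: "gsy w k \<noteq> 0" using Suc.prems(3) by simp
  have orth: "gsy w k \<bullet> gsv w k j = 0" if j: "j < k" for j
  proof -
    have "(\<Sum>i<k. (w k \<bullet> gsv w k i) *\<^sub>R gsv w k i) \<bullet> gsv w k j
        = (\<Sum>i<k. (w k \<bullet> gsv w k i) * (gsv w k i \<bullet> gsv w k j))"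
      by (simp add: inner_sum_left)
    also have "\<dots> = (\<Sum>i<k. if i = j then w k \<bullet> gsv w k j else 0)"
      by (rule sum.cong) (use IH j in auto)
    also have "\<dots> = w k \<bullet> gsv w k j" using j by simp
    finally show ?thesis by (simp add: gsy_def inner_diff_left)
  qed
  have last1: "gsv w (Suc k) k \<bullet> gsv w (Suc k) k = 1"
  proof -
    have "gsv w (Suc k) k \<bullet> gsv w (Suc k) k = (gsy w k /\<^sub>R norm (gsy w k)) \<bullet> (gsy w k /\<^sub>R norm (gsy w k))"
      by (simp only: gs_Suc_last)
    also have "\<dots> = 1" using y0 by (simp add: dot_square_norm power2_eq_square)
    finally show ?thesis .
  qed
  have lastj: "gsv w (Suc k) k \<bullet> gsv w (Suc k) j = 0" if "j < k" for j
  proof -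
    have "gsv w (Suc k) k \<bullet> gsv w (Suc k) j = (gsy w k /\<^sub>R norm (gsy w k)) \<bullet> gsv w k j"
      by (simp only: gs_Suc_last gs_Suc_lt[OF that])
    also have "\<dots> = 0" using orth[OF that] by simp
    finally show ?thesis .
  qed
  show ?case
  proof -
    have "i < Suc k" "j < Suc k" using Suc.prems by auto
    then consider "i < k" "j < k" | "i = k" "j < k" | "i < k" "j = k" | "i = k" "j = k" by linarith
    then show ?thesis
    proof cases
      case 1 then show ?thesis using IH[of i j] by (simp only: gs_Suc_lt)
    next
      case 2 then show ?thesis using lastj by simp
    next
      case 3 then show ?thesis using lastj[of i] by (simp add: inner_commute)
    next
      case 4 then show ?thesis using last1 by simp
    qed
  qed
qed

lemma gs_meas:
  fixes w :: "'b \<Rightarrow> nat \<Rightarrow> 'a::euclidean_space"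
  assumes "\<And>j. j < k \<Longrightarrow> (\<lambda>x. w x j) \<in> borel_measurable M"
  shows "i < k \<Longrightarrow> (\<lambda>x. gsv (w x) k i) \<in> borel_measurable M"
  using assms
proof (induction k arbitrary: i)
  case 0 then show ?case by simp
next
  case (Suc k)
  have IH: "\<And>i. i < k \<Longrightarrow> (\<lambda>x. gsv (w x) k i) \<in> borel_measurable M"
    using Suc.IH Suc.prems by simp
  have wk: "(\<lambda>x. w x k) \<in> borel_measurable M" using Suc.prems by simp
  show ?case
  proof (cases "i < k")
    case True
    then show ?thesis using IH[OF True] by (simp only: gs_Suc_lt)
  next
    case False
    then have ik: "i = k" using Suc.prems by simp
    have y[measurable]: "(\<lambda>x. gsy (w x) k) \<in> borel_measurable M"
      unfolding gsy_def
      by (intro borel_measurable_diff borel_measurable_sum borel_measurable_scaleR borel_measurable_inner wk IH) auto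
    have "(\<lambda>x. gsy (w x) k /\<^sub>R norm (gsy (w x) k)) \<in> borel_measurable M" by measurable
    then show ?thesis unfolding ik by (simp only: gs_Suc_last)
  qed
qed


definition Fq :: "nat \<Rightarrow> real^'d \<Rightarrow> (nat \<Rightarrow> real^'d) \<Rightarrow> real" where
  "Fq q g w = (let u = (\<lambda>i. gram_schmidt_list w q ! i);
                      v = (\<Sum>i<q. sgn (g \<bullet> u i) *\<^sub>R u i)
                  in ((g /\<^sub>R norm g) \<bullet> (v /\<^sub>R norm v))\<^sup>2)"

lemma norm_normalize_le: "norm (x /\<^sub>R norm x) \<le> 1"
  by (cases "x = 0") simp_all

lemma Fq_bound: "\<bar>Fq q c w\<bar> \<le> 1"
proof -
  have "\<bar>x \<bullet> y\<bar> \<le> 1" if "norm x \<le> 1" "norm y \<le> 1" for x y :: "real^'d"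
  proof -
    have "\<bar>x \<bullet> y\<bar> \<le> norm x * norm y" by (rule Cauchy_Schwarz_ineq2)
    also have "\<dots> \<le> 1" using that by (simp add: mult_le_one)
    finally show ?thesis .
  qed
  then have "\<bar>(x /\<^sub>R norm x) \<bullet> (y /\<^sub>R norm y)\<bar> \<le> 1" for x y :: "real^'d"
    using norm_normalize_le by blast
  then show ?thesis unfolding Fq_def Let_def by (simp add: abs_square_le_1)
qed

lemma Fq_scale:
  assumes "c \<noteq> 0"
  shows "Fq q c w = Fq q (c /\<^sub>R norm c) w"
proof -
  have n: "norm (c /\<^sub>R norm c) = 1" using assms by simp
  have s: "sgn ((c /\<^sub>R norm c) \<bullet> u) = sgn (c \<bullet> u)" for u
    using assms by (simp add: sgn_mult)
  show ?thesis unfolding Fq_def Let_def s n by simp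
qed

lemma Fq_equiv:
  fixes f :: "real^'d \<Rightarrow> real^'d" and c :: "real^'d" and w :: "nat \<Rightarrow> real^'d"
  assumes f: "orthogonal_transformation f"
  shows "Fq q (f c) (\<lambda>i. f (w i)) = Fq q c w"
proof -
  have lin: "linear f" using f orthogonal_transformation_linear by blast
  have inn: "f x \<bullet> f y = x \<bullet> y" for x y using f by (simp add: orthogonal_transformation_def)
  have nf: "norm (f x) = norm x" for x using f orthogonal_transformation_norm by blast
  have u: "gram_schmidt_list (\<lambda>i. f (w i)) q ! i = f (gram_schmidt_list w q ! i)" if "i < q" for i
    using that by (simp add: gs_equiv[OF f])
  define v where "v = (\<Sum>i<q. sgn (c \<bullet> gsv w q i) *\<^sub>R gsv w q i)"
  have "(\<Sum>i<q. sgn (f c \<bullet> gsv (\<lambda>i. f (w i)) q i) *\<^sub>R gsv (\<lambda>i. f (w i)) q i) = f v"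
  proof -
    have "(\<Sum>i<q. sgn (f c \<bullet> gsv (\<lambda>i. f (w i)) q i) *\<^sub>R gsv (\<lambda>i. f (w i)) q i)
        = (\<Sum>i<q. f (sgn (c \<bullet> gsv w q i) *\<^sub>R gsv w q i))"
      by (rule sum.cong) (simp_all add: u inn linear_cmul[OF lin])
    also have "\<dots> = f v" unfolding v_def by (simp add: linear_sum[OF lin])
    finally show ?thesis .
  qed
  then show ?thesis
    unfolding Fq_def Let_def v_def[symmetric]
    by (simp add: nf inn linear_cmul[OF lin, symmetric])
qed

lemma Fq_local: "(\<And>j. j < q \<Longrightarrow> w j = w' j) \<Longrightarrow> Fq q c w = Fq q c w'"
  unfolding Fq_def using gs_local[of q w w'] by simp

lemma sgn_mult_self_abs: "sgn (x::real) * x = \<bar>x\<bar>"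
  by (cases rule: linorder_cases[of x 0]) auto

lemma Fq_formula:
  assumes on: "\<And>i j. i < q \<Longrightarrow> j < q \<Longrightarrow> gsv w q i \<bullet> gsv w q j = (if i = j then 1 else 0)"
    and nz: "\<And>i. i < q \<Longrightarrow> c \<bullet> gsv w q i \<noteq> 0" and nc: "norm c = 1" and q: "1 \<le> q"
  shows "Fq q c w = (\<Sum>i<q. \<bar>c \<bullet> gsv w q i\<bar>)\<^sup>2 / real q"
proof -
  define u where "u i = gsv w q i" for i
  define s where "s i = sgn (c \<bullet> u i)" for i
  define v where "v = (\<Sum>i<q. s i *\<^sub>R u i)"
  have s2: "s i * s i = 1" if "i < q" for i using nz[OF that] by (simp add: s_def u_def sgn_if)
  have cv: "c \<bullet> v = (\<Sum>i<q. \<bar>c \<bullet> u i\<bar>)"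
    unfolding v_def by (simp add: inner_sum_right s_def sgn_mult_self_abs)
  have "v \<bullet> v = (\<Sum>i<q. s i * (\<Sum>j<q. s j * (u j \<bullet> u i)))"
    unfolding v_def by (simp add: inner_sum_left inner_sum_right)
  also have "\<dots> = (\<Sum>i<q. (1::real))"
  proof (intro sum.cong refl)
    fix i assume i: "i \<in> {..<q}"
    have "(\<Sum>j<q. s j * (u j \<bullet> u i)) = (\<Sum>j<q. if j = i then s j else 0)"
      by (intro sum.cong refl) (use i in \<open>simp add: on u_def\<close>)
    also have "\<dots> = s i" using i by simp
    finally show "s i * (\<Sum>j<q. s j * (u j \<bullet> u i)) = 1" using s2 i by simp
  qed
  also have "\<dots> = real q" by simp
  finally have vv: "v \<bullet> v = real q" .
  then have nv: "(norm v)\<^sup>2 = real q" by (simp add: power2_norm_eq_inner)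
  have qpos: "real q > 0" using q by simp
  have "Fq q c w = (c \<bullet> (v /\<^sub>R norm v))\<^sup>2"
    unfolding Fq_def Let_def u_def[symmetric] s_def[symmetric] v_def[symmetric] using nc by simp
  also have "\<dots> = (c \<bullet> v)\<^sup>2 / (norm v)\<^sup>2" by (simp add: power_divide power_mult_distrib divide_inverse power_inverse)
  also have "\<dots> = (\<Sum>i<q. \<bar>c \<bullet> u i\<bar>)\<^sup>2 / real q" by (simp add: cv nv)
  finally show ?thesis by (simp add: u_def)
qed


abbreviation PP :: "nat \<Rightarrow> (nat \<Rightarrow> real^'d) measure" where
  "PP q \<equiv> PiM {..<q} (\<lambda>_. sphere_uniform)"

lemma P_prob: "prob_space (PP q :: (nat \<Rightarrow> real^'d) measure)"
  by (rule prob_space_PiM) (rule S_prob)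

lemma comp_meas: "j < q \<Longrightarrow> (\<lambda>w. w j) \<in> borel_measurable (PP q :: (nat \<Rightarrow> real^'d) measure)"
  using measurable_component_singleton[of j "{..<q}" "\<lambda>_. sphere_uniform :: (real^'d) measure"]
  by (simp add: measurable_cong_sets[OF refl sets_S])

definition UU :: "nat \<Rightarrow> (nat \<Rightarrow> real^'d) \<Rightarrow> nat \<Rightarrow> real^'d" where
  "UU q w i = (if i < q then gsv w q i else 0)"

lemma UU_meas[measurable]: "(\<lambda>w. UU q w i) \<in> borel_measurable (PP q :: (nat \<Rightarrow> real^'d) measure)"
proof (cases "i < q")
  case True
  have "(\<lambda>w. gsv w q i) \<in> borel_measurable (PP q :: (nat \<Rightarrow> real^'d) measure)"
    using gs_meas[of q "\<lambda>w. w" "PP q" i] comp_meas True by blast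
  then show ?thesis using True by (simp add: UU_def)
qed (simp add: UU_def)

lemma Fq_UU: "Fq q c w = ((c /\<^sub>R norm c) \<bullet> ((\<Sum>i<q. sgn (c \<bullet> UU q w i) *\<^sub>R UU q w i) /\<^sub>R norm (\<Sum>i<q. sgn (c \<bullet> UU q w i) *\<^sub>R UU q w i)))\<^sup>2"
proof -
  have "(\<Sum>i<q. sgn (c \<bullet> UU q w i) *\<^sub>R UU q w i) = (\<Sum>i<q. sgn (c \<bullet> gsv w q i) *\<^sub>R gsv w q i)"
    by (rule sum.cong) (simp_all add: UU_def)
  then show ?thesis by (simp add: Fq_def Let_def)
qed

lemma Fq_meas:
  "(\<lambda>p. Fq q (fst p) (snd p)) \<in> borel_measurable ((sphere_uniform :: (real^'d) measure) \<Otimes>\<^sub>M PP q)"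
proof -
  have [measurable]: "(\<lambda>p. UU q (snd p) i) \<in> borel_measurable ((sphere_uniform :: (real^'d) measure) \<Otimes>\<^sub>M PP q)" for i
    by (rule measurable_compose[OF measurable_snd UU_meas])
  have [measurable]: "fst \<in> borel_measurable ((sphere_uniform :: (real^'d) measure) \<Otimes>\<^sub>M PP q)"
    using measurable_fst[of "sphere_uniform :: (real^'d) measure" "PP q"]
    by (simp add: measurable_cong_sets[OF refl sets_S])
  show ?thesis unfolding Fq_UU by measurable
qed

lemma S_distr_self:
  fixes f :: "real^'d \<Rightarrow> real^'d"
  assumes f: "orthogonal_transformation f"
  shows "distr sphere_uniform sphere_uniform f = sphere_uniform"
proof -
  have fm: "f \<in> borel_measurable borel"
    using f orthogonal_transformation_linear linear_borel by blast
  have "distr sphere_uniform sphere_uniform f = distr sphere_uniform borel f"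
    by (rule distr_cong) (simp_all add: sets_eq_imp_space_eq)
  also have "\<dots> = sphere_uniform" by (rule S_orth[OF f])
  finally show ?thesis .
qed

lemma P_inv:
  fixes f :: "real^'d \<Rightarrow> real^'d" and H :: "(nat \<Rightarrow> real^'d) \<Rightarrow> real"
  assumes f: "orthogonal_transformation f" and H: "H \<in> borel_measurable (PP q)"
  shows "(\<integral>w. H (\<lambda>i\<in>{..<q}. f (w i)) \<partial>PP q) = (\<integral>w. H w \<partial>PP q)"
proof -
  have fb: "f \<in> borel_measurable borel"
    using f orthogonal_transformation_linear linear_borel by blast
  then have fm: "f \<in> sphere_uniform \<rightarrow>\<^sub>M sphere_uniform"
    by (simp add: measurable_cong_sets[OF sets_S sets_S])
  have pps: "product_prob_space (\<lambda>_. sphere_uniform :: (real^'d) measure)"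
    by (rule product_prob_spaceI) (rule S_prob)
  have D: "distr (PP q) (PP q) (compose {..<q} f) = (PP q :: (nat \<Rightarrow> real^'d) measure)"
    using distr_PiM_finite_prob_space[OF _ pps pps, of "{..<q}" f] fm
    by (simp add: S_distr_self[OF f])
  have cm0: "(\<lambda>w. \<lambda>i\<in>{..<q}. f (w i)) \<in> PP q \<rightarrow>\<^sub>M PP q"
  proof (rule measurable_restrict)
    fix i assume "i \<in> {..<q}"
    then show "(\<lambda>w. f (w i)) \<in> PP q \<rightarrow>\<^sub>M sphere_uniform"
      by (intro measurable_compose[OF _ fm] measurable_component_singleton)
  qed
  have ce: "compose {..<q} f = (\<lambda>w. \<lambda>i\<in>{..<q}. f (w i))" by (simp add: compose_def fun_eq_iff)
  have cm: "compose {..<q} f \<in> PP q \<rightarrow>\<^sub>M PP q" using cm0 by (simp add: ce)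
  have "(\<integral>w. H w \<partial>PP q) = (\<integral>w. H w \<partial>distr (PP q) (PP q) (compose {..<q} f))" by (simp add: D)
  also have "\<dots> = (\<integral>w. H (compose {..<q} f w) \<partial>PP q)"
    by (rule integral_distr[OF cm H])
  finally show ?thesis by (simp add: compose_def)
qed

lemma gsy_meas:
  assumes "k < q"
  shows "(\<lambda>w. gsy w k) \<in> borel_measurable (PP q :: (nat \<Rightarrow> real^'d) measure)"
proof -
  have cj: "\<And>j. j < k \<Longrightarrow> (\<lambda>w. w j) \<in> borel_measurable (PP q :: (nat \<Rightarrow> real^'d) measure)"
    using comp_meas assms by simp
  have g: "\<And>j. j < k \<Longrightarrow> (\<lambda>w. gsv w k j) \<in> borel_measurable (PP q :: (nat \<Rightarrow> real^'d) measure)"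
    using gs_meas[of k "\<lambda>w. w" "PP q"] cj by blast
  have wk: "(\<lambda>w. w k) \<in> borel_measurable (PP q :: (nat \<Rightarrow> real^'d) measure)" using comp_meas assms by simp
  show ?thesis unfolding gsy_def
    by (intro borel_measurable_diff borel_measurable_sum borel_measurable_scaleR borel_measurable_inner wk g) auto
qed

lemma S_AE_span:
  fixes L :: "(real^'d) list"
  assumes "length L < CARD('d)"
  shows "AE y in sphere_uniform. y \<notin> span (set L)"
proof -
  have sub: "subspace (span (set L))" by (rule subspace_span)
  have cl: "closed (span (set L))" by (rule closed_subspace[OF sub])
  have "dim (span (set L)) \<le> card (set L)" by (simp add: dim_span dim_le_card')
  also have "\<dots> \<le> length L" by (rule card_length)
  finally have "dim (span (set L)) < DIM(real^'d)" using assms by simp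
  then have neg: "negligible (span (set L))" by (rule negligible_lowdim)
  have cone: "x \<in> span (set L)" if "x \<noteq> 0" "x /\<^sub>R norm x \<in> span (set L)" for x
  proof -
    have "norm x *\<^sub>R (x /\<^sub>R norm x) \<in> span (set L)" using that(2) by (rule span_scale)
    then show ?thesis using that(1) by simp
  qed
  show ?thesis using S_AE_cone[OF borel_closed[OF cl] neg cone] by (auto elim: eventually_mono)
qed

lemma bad_null:
  assumes k: "k < q" and qd: "q \<le> CARD('d)"
  shows "{w \<in> space (PP q). gsy w k = 0} \<in> null_sets (PP q :: (nat \<Rightarrow> real^'d) measure)"
proof -
  define B where "B = {w \<in> space (PP q). gsy w k = (0::real^'d)}"
  have gm[measurable]: "(\<lambda>w. gsy w k) \<in> borel_measurable (PP q :: (nat \<Rightarrow> real^'d) measure)"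
    by (rule gsy_meas[OF k])
  have Bs: "B \<in> sets (PP q)" unfolding B_def by measurable
  interpret PS: product_prob_space "\<lambda>_. sphere_uniform :: (real^'d) measure"
    by (rule product_prob_spaceI) (rule S_prob)
  define I' where "I' = {..<q} - {k}"
  have ins: "insert k I' = {..<q}" using k by (auto simp: I'_def)
  have fin: "finite I'" "k \<notin> I'" by (auto simp: I'_def)
  have im: "indicator B \<in> borel_measurable (PiM (insert k I') (\<lambda>_. sphere_uniform :: (real^'d) measure))"
    using Bs by (simp add: ins)
  have inner0: "(\<integral>\<^sup>+ y. indicator B (x(k := y)) \<partial>sphere_uniform) = 0" for x :: "nat \<Rightarrow> real^'d"
  proof -
    have "AE y in sphere_uniform. y \<notin> span (set (gram_schmidt_list x k))"
      by (rule S_AE_span) (use k qd in simp)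
    then have "AE y in sphere_uniform. indicator B (x(k := y)) = (0::ennreal)"
    proof eventually_elim
      case (elim y)
      have loc: "gram_schmidt_list (x(k := y)) k = gram_schmidt_list x k"
        by (rule gs_local) simp
      have "gsy (x(k := y)) k \<noteq> 0"
      proof
        assume "gsy (x(k := y)) k = 0"
        then have "y = (\<Sum>j<k. (y \<bullet> gsv x k j) *\<^sub>R gsv x k j)"
          by (simp add: gsy_def loc)
        moreover have "(\<Sum>j<k. (y \<bullet> gsv x k j) *\<^sub>R gsv x k j) \<in> span (set (gram_schmidt_list x k))"
          by (intro span_sum span_scale span_base) simp
        ultimately show False using elim by simp
      qed
      then show ?case by (simp add: B_def)
    qed
    then show ?thesis by (simp add: nn_integral_0_iff_AE[symmetric] nn_integral_cong_AE)
  qed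
  have "emeasure (PP q) B = (\<integral>\<^sup>+ w. indicator B w \<partial>PP q)"
    using Bs by simp
  also have "\<dots> = (\<integral>\<^sup>+ w. indicator B w \<partial>PiM (insert k I') (\<lambda>_. sphere_uniform))" by (simp add: ins)
  also have "\<dots> = (\<integral>\<^sup>+ x. (\<integral>\<^sup>+ y. indicator B (x(k := y)) \<partial>sphere_uniform) \<partial>PiM I' (\<lambda>_. sphere_uniform))"
    by (rule PS.product_nn_integral_insert[OF fin im])
  also have "\<dots> = 0" by (simp add: inner0)
  finally show ?thesis using Bs unfolding B_def by auto
qed

lemma AE_nondeg:
  assumes qd: "q \<le> CARD('d)"
  shows "AE w in (PP q :: (nat \<Rightarrow> real^'d) measure). \<forall>k\<in>{..<q}. gsy w k \<noteq> 0"
proof (rule AE_finite_allI)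
  fix k assume "k \<in> {..<q}"
  then have k: "k < q" by simp
  show "AE w in (PP q :: (nat \<Rightarrow> real^'d) measure). gsy w k \<noteq> 0"
    by (rule AE_I'[OF bad_null[OF k qd]]) auto
qed simp


lemma Fq_meas_w: "(\<lambda>w. Fq q c w) \<in> borel_measurable (PP q :: (nat \<Rightarrow> real^'d) measure)"
  using measurable_Pair2[OF Fq_meas[of q], of c] by simp

lemma sum_sum_if:
  assumes "i < (q::nat)"
  shows "(\<Sum>j<q. if i = j then A else B) = A + (real q - 1) * (B::real)"
proof -
  have "(\<Sum>j<q. if i = j then A else B) = A + (\<Sum>j\<in>{..<q} - {i}. if i = j then A else B)"
    using assms by (subst sum.remove[of _ i]) auto
  also have "(\<Sum>j\<in>{..<q} - {i}. if i = j then A else B) = (\<Sum>j\<in>{..<q} - {i}. B)"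
    by (rule sum.cong) auto
  also have "\<dots> = (real q - 1) * B" using assms by (simp add: of_nat_diff)
  finally show ?thesis .
qed

lemma inner_const:
  assumes nd: "\<And>k. k < q \<Longrightarrow> gsy w k \<noteq> 0" and q: "1 \<le> q" and qd: "q \<le> CARD('d)"
  shows "(\<integral>c. Fq q c w \<partial>(sphere_uniform :: (real^'d) measure)) = (1 / real CARD('d)) * ((2 / pi) * (real q - 1) + 1)"
proof -
  interpret S: prob_space "sphere_uniform :: (real^'d) measure" by (rule S_prob)
  define u where "u i = gsv w q i" for i
  have on: "\<And>i j. i < q \<Longrightarrow> j < q \<Longrightarrow> u i \<bullet> u j = (if i = j then 1 else 0)"
    unfolding u_def by (rule gs_orthonormal[OF nd])
  have nu: "norm (u i) = 1" if "i < q" for i using on[OF that that] by (simp add: norm_eq_1)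
  have u0: "u i \<noteq> 0" if "i < q" for i using nu[OF that] by auto
  have AEc: "AE c in (sphere_uniform :: (real^'d) measure). norm c = 1 \<and> (\<forall>i\<in>{..<q}. c \<bullet> u i \<noteq> 0)"
  proof -
    have "AE c in (sphere_uniform :: (real^'d) measure). \<forall>i\<in>{..<q}. c \<bullet> u i \<noteq> 0"
    proof (rule AE_finite_allI)
      fix i assume "i \<in> {..<q}"
      then have i: "i < q" by simp
      have A: "{x. u i \<bullet> x = 0} \<in> sets borel" by (intro borel_closed closed_hyperplane)
      have neg: "negligible {x. u i \<bullet> x = 0}" using u0[OF i] by (intro negligible_hyperplane) simp
      have cone: "x \<in> {x. u i \<bullet> x = 0}" if "x \<noteq> 0" "x /\<^sub>R norm x \<in> {x. u i \<bullet> x = 0}" for x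
        using that by simp
      show "AE c in (sphere_uniform :: (real^'d) measure). c \<bullet> u i \<noteq> 0"
        using S_AE_cone[OF A neg cone] by (auto elim: eventually_mono simp: inner_commute)
    qed simp
    then show ?thesis using AE_S_norm by eventually_elim simp
  qed
  define E where "E i j = (\<integral>c. \<bar>c \<bullet> u i\<bar> * \<bar>c \<bullet> u j\<bar> \<partial>(sphere_uniform :: (real^'d) measure))" for i j
  have intij: "integrable sphere_uniform (\<lambda>c::real^'d. \<bar>c \<bullet> u i\<bar> * \<bar>c \<bullet> u j\<bar>)" if "i < q" "j < q" for i j
  proof (rule S_integrable_bounded[where B=1])
    fix c :: "real^'d" assume "norm c = 1"
    then have "\<bar>c \<bullet> u i\<bar> \<le> 1" "\<bar>c \<bullet> u j\<bar> \<le> 1"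
      using Cauchy_Schwarz_ineq2[of c "u i"] Cauchy_Schwarz_ineq2[of c "u j"] nu that by simp_all
    then show "\<bar>\<bar>c \<bullet> u i\<bar> * \<bar>c \<bullet> u j\<bar>\<bar> \<le> 1" by (simp add: abs_mult mult_le_one)
  qed measurable
  have Eij: "E i j = (if i = j then 1 / real CARD('d) else 2 / (pi * real CARD('d)))" if "i < q" "j < q" for i j
  proof (cases "i = j")
    case True
    have "E i j = (\<integral>c. (c \<bullet> u i)\<^sup>2 \<partial>(sphere_uniform :: (real^'d) measure))"
      unfolding E_def True by (simp add: power2_eq_square abs_mult_self_eq)
    also have "\<dots> = 1 / real CARD('d)" by (rule S_sq[OF nu[OF that(1)]])
    finally show ?thesis using True by simp
  next
    case False
    have "E i j = 2 / (pi * real CARD('d))"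
      unfolding E_def by (rule S_cross) (use on that False in auto)
    then show ?thesis using False by simp
  qed
  have "(\<integral>c. Fq q c w \<partial>(sphere_uniform :: (real^'d) measure))
      = (\<integral>c. (\<Sum>i<q. \<Sum>j<q. \<bar>c \<bullet> u i\<bar> * \<bar>c \<bullet> u j\<bar>) / real q \<partial>(sphere_uniform :: (real^'d) measure))"
  proof (rule integral_cong_AE)
    show "AE c in (sphere_uniform :: (real^'d) measure). Fq q c w = (\<Sum>i<q. \<Sum>j<q. \<bar>c \<bullet> u i\<bar> * \<bar>c \<bullet> u j\<bar>) / real q"
      using AEc
    proof eventually_elim
      case (elim c)
      have "Fq q c w = (\<Sum>i<q. \<bar>c \<bullet> u i\<bar>)\<^sup>2 / real q"
        unfolding u_def by (rule Fq_formula[OF gs_orthonormal[OF nd]]) (use elim q in \<open>auto simp: u_def\<close>)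
      also have "(\<Sum>i<q. \<bar>c \<bullet> u i\<bar>)\<^sup>2 = (\<Sum>i<q. \<Sum>j<q. \<bar>c \<bullet> u i\<bar> * \<bar>c \<bullet> u j\<bar>)"
        by (simp add: power2_eq_square sum_product)
      finally show ?case .
    qed
    show "(\<lambda>c. Fq q c w) \<in> borel_measurable sphere_uniform"
    proof -
      have "(\<lambda>c. Fq q c (restrict w {..<q})) \<in> borel_measurable sphere_uniform"
        using measurable_Pair1[OF Fq_meas[of q], of "restrict w {..<q}"] by (simp add: space_PiM)
      moreover have "Fq q c (restrict w {..<q}) = Fq q c w" for c by (rule Fq_local) simp
      ultimately show ?thesis by simp
    qed
  qed measurable
  also have "\<dots> = (\<integral>c. (\<Sum>i<q. \<Sum>j<q. \<bar>c \<bullet> u i\<bar> * \<bar>c \<bullet> u j\<bar>) \<partial>(sphere_uniform :: (real^'d) measure)) / real q"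
    by (rule integral_divide_zero)
  also have "(\<integral>c. (\<Sum>i<q. \<Sum>j<q. \<bar>c \<bullet> u i\<bar> * \<bar>c \<bullet> u j\<bar>) \<partial>(sphere_uniform :: (real^'d) measure)) = (\<Sum>i<q. \<Sum>j<q. E i j)"
  proof -
    have "(\<integral>c. (\<Sum>i<q. \<Sum>j<q. \<bar>c \<bullet> u i\<bar> * \<bar>c \<bullet> u j\<bar>) \<partial>(sphere_uniform :: (real^'d) measure))
        = (\<Sum>i<q. (\<integral>c. (\<Sum>j<q. \<bar>c \<bullet> u i\<bar> * \<bar>c \<bullet> u j\<bar>) \<partial>(sphere_uniform :: (real^'d) measure)))"
      by (rule Bochner_Integration.integral_sum) (auto intro!: Bochner_Integration.integrable_sum intij)
    also have "\<dots> = (\<Sum>i<q. \<Sum>j<q. E i j)"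
      unfolding E_def by (intro sum.cong refl Bochner_Integration.integral_sum) (auto intro: intij)
    finally show ?thesis .
  qed
  also have "(\<Sum>i<q. \<Sum>j<q. E i j) = (\<Sum>i<q. 1 / real CARD('d) + (real q - 1) * (2 / (pi * real CARD('d))))"
    by (intro sum.cong refl) (simp add: Eij sum_sum_if)
  also have "\<dots> / real q = (1 / real CARD('d)) * ((2 / pi) * (real q - 1) + 1)"
    using q by (simp add: field_simps)
  finally show ?thesis .
qed

lemma main_Fq:
  fixes g :: "real ^ 'd" and q :: nat
  assumes q1: "1 \<le> q" and qd: "q \<le> CARD('d)" and g0: "g \<noteq> 0"
  shows "(\<integral>w. Fq q g w \<partial>(PP q :: (nat \<Rightarrow> real^'d) measure)) = (1 / real CARD('d)) * ((2 / pi) * (real q - 1) + 1)"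
proof -
  define K where "K = (1 / real CARD('d)) * ((2 / pi) * (real q - 1) + 1)"
  interpret S: prob_space "sphere_uniform :: (real^'d) measure" by (rule S_prob)
  interpret P: prob_space "PP q :: (nat \<Rightarrow> real^'d) measure" by (rule P_prob)
  interpret SP: pair_prob_space "sphere_uniform :: (real^'d) measure" "PP q :: (nat \<Rightarrow> real^'d) measure"
    by (intro pair_prob_space.intro pair_sigma_finite.intro prob_space_imp_sigma_finite S_prob P_prob)
  define gh where "gh = g /\<^sub>R norm g"
  have ngh: "norm gh = 1" using g0 by (simp add: gh_def)
  define \<Phi> where "\<Phi> c = (\<integral>w. Fq q c w \<partial>(PP q :: (nat \<Rightarrow> real^'d) measure))" for c
  have "Fq q g = Fq q gh" unfolding gh_def by (intro ext Fq_scale[OF g0])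
  then have \<Phi>g: "\<Phi> g = \<Phi> gh" unfolding \<Phi>_def by simp
  have \<Phi>c: "\<Phi> c = \<Phi> gh" if nc: "norm c = 1" for c
  proof -
    obtain f where f: "orthogonal_transformation f" "f gh = c"
    proof -
      have "norm gh = norm c" using ngh nc by simp
      then show ?thesis using orthogonal_transformation_exists that by metis
    qed
    have "\<Phi> c = (\<integral>w. Fq q (f gh) (\<lambda>i\<in>{..<q}. f (w i)) \<partial>(PP q :: (nat \<Rightarrow> real^'d) measure))"
      unfolding \<Phi>_def f(2)[symmetric] by (rule P_inv[OF f(1) Fq_meas_w, symmetric])
    also have "\<dots> = (\<integral>w. Fq q (f gh) (\<lambda>i. f (w i)) \<partial>(PP q :: (nat \<Rightarrow> real^'d) measure))"
      by (intro Bochner_Integration.integral_cong refl Fq_local) simp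
    also have "\<dots> = \<Phi> gh" unfolding \<Phi>_def by (simp add: Fq_equiv[OF f(1)])
    finally show ?thesis .
  qed
  have FqM: "case_prod (Fq q) \<in> borel_measurable ((sphere_uniform :: (real^'d) measure) \<Otimes>\<^sub>M PP q)"
    using Fq_meas[of q] by (simp add: case_prod_beta')
  have FqM': "case_prod (\<lambda>w c. Fq q c w) \<in> borel_measurable ((PP q :: (nat \<Rightarrow> real^'d) measure) \<Otimes>\<^sub>M sphere_uniform)"
    using measurable_pair_swap[OF FqM] by (simp add: case_prod_beta')
  have PhiM: "\<Phi> \<in> borel_measurable (sphere_uniform :: (real^'d) measure)"
    unfolding \<Phi>_def by (rule P.borel_measurable_lebesgue_integral[OF FqM])
  have "\<Phi> gh = (\<integral>c. \<Phi> gh \<partial>(sphere_uniform :: (real^'d) measure))" using S.prob_space by simp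
  also have "\<dots> = (\<integral>c. \<Phi> c \<partial>(sphere_uniform :: (real^'d) measure))"
    by (rule integral_cong_AE) (use AE_S_norm \<Phi>c PhiM in \<open>auto elim!: eventually_mono\<close>)
  also have "\<dots> = (\<integral>w. (\<integral>c. Fq q c w \<partial>(sphere_uniform :: (real^'d) measure)) \<partial>(PP q :: (nat \<Rightarrow> real^'d) measure))"
  proof -
    have int: "integrable ((sphere_uniform :: (real^'d) measure) \<Otimes>\<^sub>M PP q) (\<lambda>(c, w). Fq q c w)"
    proof (rule SP.integrable_const_bound[where B=1])
      show "AE x in (sphere_uniform :: (real^'d) measure) \<Otimes>\<^sub>M PP q. norm (case x of (c, w) \<Rightarrow> Fq q c w) \<le> 1"
        by (simp add: Fq_bound split: prod.splits)
      show "(\<lambda>(c, w). Fq q c w) \<in> borel_measurable ((sphere_uniform :: (real^'d) measure) \<Otimes>\<^sub>M PP q)"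
        using Fq_meas[of q] by (simp add: case_prod_beta')
    qed
    show ?thesis unfolding \<Phi>_def using SP.Fubini_integral[OF int] by simp
  qed
  also have "\<dots> = (\<integral>w. K \<partial>(PP q :: (nat \<Rightarrow> real^'d) measure))"
  proof (rule integral_cong_AE)
    show "AE w in (PP q :: (nat \<Rightarrow> real^'d) measure). (\<integral>c. Fq q c w \<partial>(sphere_uniform :: (real^'d) measure)) = K"
      using AE_nondeg[OF qd] by eventually_elim (simp add: K_def inner_const[OF _ q1 qd])
    show "(\<lambda>w. \<integral>c. Fq q c w \<partial>(sphere_uniform :: (real^'d) measure)) \<in> borel_measurable (PP q :: (nat \<Rightarrow> real^'d) measure)"
      by (rule S.borel_measurable_lebesgue_integral[OF FqM'])
  qed simp
  also have "\<dots> = K" using P.prob_space by simp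
  finally show ?thesis using \<Phi>g unfolding \<Phi>_def K_def by simp
qed

theorem lemmaA5:
  fixes g :: "real ^ 'd" and q :: nat
  assumes "1 \<le> q" and "q \<le> CARD('d)" and "g \<noteq> 0"
  shows "(\<integral>w. (let u = (\<lambda>i. gram_schmidt_list w q ! i);
                      v = (\<Sum>i<q. sgn (g \<bullet> u i) *\<^sub>R u i)
                  in ((g /\<^sub>R norm g) \<bullet> (v /\<^sub>R norm v))\<^sup>2)
           \<partial>(PiM {..<q} (\<lambda>_. sphere_uniform)))
         = (1 / real CARD('d)) * ((2 / pi) * (real q - 1) + 1)"
  using main_Fq[OF assms] unfolding Fq_def .


end
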